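(* Let $X_0$ be a smooth closed curve which is star-shaped with respect to a point $O$ (taken as origin), so that in polar coordinates $X_0(\theta)=r_0(\theta)(\cos\theta,\sin\theta)$ with $r_0>0$. Let $r:[0,2\pi]\times[0,\omega)\to(0,\infty)$ be a smooth solution, $2\pi$-periodic in $\theta$, of $$\frac{\partial r}{\partial t}=\frac{1}{g^2}\frac{\partial^2 r}{\partial\theta^2}-\frac{2}{rg^2}\left(\frac{\partial r}{\partial\theta}\right)^2-\frac{r}{g^2}+\frac{2\pi g}{rL},\qquad r(\theta,0)=r_0(\theta),$$ where $g=\sqrt{r^2+(\partial r/\partial\theta)^2}$ and $L(t)=\int_0^{2\pi}g(\theta,t)\,d\theta$, so that $X(\theta,t)=r(\theta,t)(\cos\theta,\sin\theta)$ solves Gage's area-preserving flow up to a tangential reparametrization. If $r(\theta,t)\ge c>0$ for all $(\theta,t)\in[0,2\pi]\times[0,\omega)$ for some constant $c$, then for all such $(\theta,t)$ $$r(\theta,t)\le \frac{L_0}{2},\qquad \left|\frac{\partial r}{\partial\theta}(\theta,t)\right|\le C_1,$$ where $L_0$ is the length of $X_0$ and $C_1=\max\left\{\max_\theta\left|\frac{\partial r}{\partial\theta}(\theta,0)\right|,\frac{3L_0}{\pi}\right\}$.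
   Context: Gage's area-preserving flow: $\frac{\partial X}{\partial t}=\left(\kappa-\frac{2\pi}{L}\right)N$, where $\kappa$ is the curvature, $N$ the inward unit normal, $L$ the length of the evolving curve. A closed curve is star-shaped with respect to the origin $O$ if $\det(X(s),T(s))>0$ for all arc length parameters $s$, $T$ the unit tangent. All curves are regular, closed and embedded. *)

theory Defs
  imports "HOL-Analysis.Analysis"
begin

text \<open>Smoothness (C-infinity) of a function r(theta,t) on R x [0,w), expressed through a
  family D i j of all mixed partial derivatives (D i j = d^i/dtheta^i d^j/dt^j r):
  D 0 0 = r, every D i j has partial derivatives D (i+1) j in theta and D i (j+1) in t
  (one-sided at t = 0), and every D i j is jointly continuous.\<close>
definition smooth_partials ::
  "real \<Rightarrow> (real \<Rightarrow> real \<Rightarrow> real) \<Rightarrow> (nat \<Rightarrow> nat \<Rightarrow> real \<Rightarrow> real \<Rightarrow> real) \<Rightarrow> bool" where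
  "smooth_partials \<omega> r D \<longleftrightarrow>
     D 0 0 = r \<and>
     (\<forall>i j. \<forall>\<theta>. \<forall>t\<in>{0..<\<omega>}.
        ((\<lambda>x. D i j x t) has_real_derivative D (Suc i) j \<theta> t) (at \<theta>) \<and>
        ((\<lambda>s. D i j \<theta> s) has_real_derivative D i (Suc j) \<theta> t) (at t within {0..<\<omega>})) \<and>
     (\<forall>i j. continuous_on (UNIV \<times> {0..<\<omega>}) (\<lambda>(\<theta>, t). D i j \<theta> t))"

definition polar_g :: "(nat \<Rightarrow> nat \<Rightarrow> real \<Rightarrow> real \<Rightarrow> real) \<Rightarrow> real \<Rightarrow> real \<Rightarrow> real" where
  "polar_g D \<theta> t = sqrt ((D 0 0 \<theta> t)\<^sup>2 + (D 1 0 \<theta> t)\<^sup>2)"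

definition polar_length :: "(nat \<Rightarrow> nat \<Rightarrow> real \<Rightarrow> real \<Rightarrow> real) \<Rightarrow> real \<Rightarrow> real" where
  "polar_length D t = integral {0..2*pi} (\<lambda>\<theta>. polar_g D \<theta> t)"

end

theory Submission
  imports Defs
begin


lemma periodic_int:
  fixes f :: "real \<Rightarrow> 'a"
  assumes "\<And>x. f (x + c) = f x"
  shows "f (x + of_int n * c) = f x"
proof -
  have nat: "f (y + of_nat m * c) = f y" for y m
  proof (induction m)
    case (Suc m)
    have "f (y + of_nat (Suc m) * c) = f ((y + of_nat m * c) + c)" by (simp add: algebra_simps)
    also have "\<dots> = f (y + of_nat m * c)" by (rule assms)
    finally show ?case using Suc by simp
  qed simp
  show ?thesis
  proof (cases "n \<ge> 0")
    case True
    then obtain m where "n = int m" using nonneg_int_cases by blast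
    then show ?thesis using nat by simp
  next
    case False
    then have "- n \<ge> 0" by simp
    then obtain m where "- n = int m" using nonneg_int_cases by blast
    then have m: "n = - int m" by simp
    have "f x = f ((x - of_nat m * c) + of_nat m * c)" by simp
    also have "\<dots> = f (x - of_nat m * c)" by (rule nat)
    finally show ?thesis using m by simp
  qed
qed

lemma periodic_reduce:
  fixes f :: "real \<Rightarrow> 'a"
  assumes "\<And>x. f (x + c) = f x" "c > 0"
  shows "\<exists>y\<in>{0..c}. f x = f y"
proof -
  define n where "n = \<lfloor>x / c\<rfloor>"
  define y where "y = x - of_int n * c"
  have "of_int n \<le> x / c" "x / c < of_int n + 1" unfolding n_def by linarith+
  then have "of_int n * c \<le> x" "x < (of_int n + 1) * c" using assms(2)
    by (auto simp: field_simps)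
  then have "y \<in> {0..c}" unfolding y_def by (auto simp: algebra_simps)
  moreover have "f y = f x" using periodic_int[of f c y n, OF assms(1)] unfolding y_def by simp
  ultimately show ?thesis by (intro bexI[of _ y]) auto
qed

lemma second_deriv_max:
  fixes f f' :: "real \<Rightarrow> real"
  assumes d1: "\<And>y. (f has_real_derivative f' y) (at y)"
    and d2: "(f' has_real_derivative f2) (at x)"
    and z: "f' x = 0" and mx: "\<And>y. f y \<le> f x"
  shows "f2 \<le> 0"
proof (rule ccontr)
  assume "\<not> f2 \<le> 0"
  then have "f2 > 0" by simp
  from DERIV_pos_inc_right[OF d2 this] obtain d where d: "d > 0"
    "\<And>h. h > 0 \<Longrightarrow> h < d \<Longrightarrow> f' x < f' (x + h)" by auto
  define h where "h = d / 2"
  have h: "h > 0" "h < d" using d unfolding h_def by auto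
  obtain z where z: "x < z" "z < x + h" "f (x + h) - f x = (x + h - x) * f' z"
    using MVT2[of x "x + h" f f'] h d1 by auto
  have "f' z > 0" using d(2)[of "z - x"] z h \<open>f' x = 0\<close> by auto
  then have "h * f' z > 0" using h by simp
  then have "f (x + h) > f x" using z by simp
  with mx[of "x + h"] show False by simp
qed

lemma second_deriv_min:
  fixes f f' :: "real \<Rightarrow> real"
  assumes d1: "\<And>y. (f has_real_derivative f' y) (at y)"
    and d2: "(f' has_real_derivative f2) (at x)"
    and z: "f' x = 0" and mn: "\<And>y. f x \<le> f y"
  shows "f2 \<ge> 0"
proof -
  have "- f2 \<le> 0"
    by (rule second_deriv_max[where f="\<lambda>y. - f y" and f'="\<lambda>y. - f' y" and x=x])
       (auto intro!: derivative_eq_intros d1 d2 simp: z mn)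
  then show ?thesis by simp
qed

lemma max_principle:
  fixes P P' :: "real \<Rightarrow> real \<Rightarrow> real" and K \<omega> c :: real
  assumes c: "c > 0"
    and cont: "continuous_on (UNIV \<times> {0..<\<omega>}) (\<lambda>(\<theta>, t). P \<theta> t)"
    and per: "\<And>\<theta> t. t \<in> {0..<\<omega>} \<Longrightarrow> P (\<theta> + c) t = P \<theta> t"
    and der: "\<And>\<theta> t. t \<in> {0..<\<omega>} \<Longrightarrow> ((\<lambda>s. P \<theta> s) has_real_derivative P' \<theta> t) (at t within {0..<\<omega>})"
    and init: "\<And>\<theta>. P \<theta> 0 \<le> K"
    and key: "\<And>\<theta> t. t \<in> {0<..<\<omega>} \<Longrightarrow> (\<And>\<phi>. P \<phi> t \<le> P \<theta> t) \<Longrightarrow> P \<theta> t > K \<Longrightarrow> P' \<theta> t < 0"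
    and t1: "t1 \<in> {0..<\<omega>}"
  shows "P \<theta>1 t1 \<le> K"
proof (rule ccontr)
  assume "\<not> P \<theta>1 t1 \<le> K"
  then have big: "P \<theta>1 t1 > K" by simp
  obtain \<theta>0 where \<theta>0: "\<theta>0 \<in> {0..c}" "P \<theta>1 t1 = P \<theta>0 t1"
    using periodic_reduce[of "\<lambda>x. P x t1" c \<theta>1] per t1 c by auto
  define K' where "K' = (K + P \<theta>1 t1) / 2"
  have K': "K < K'" "K' < P \<theta>1 t1" using big unfolding K'_def by auto
  define S where "S = ({0..c} \<times> {0..t1}) \<inter> (\<lambda>(\<theta>, t). P \<theta> t) -` {K'..}"
  have sub: "{0..c} \<times> {0..t1} \<subseteq> UNIV \<times> {0..<\<omega>}" using t1 by auto
  have "closed S" unfolding S_def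
    by (rule continuous_closed_preimage[OF continuous_on_subset[OF cont sub]])
       (auto intro: closed_Times)
  moreover have "bounded S" unfolding S_def
    by (rule bounded_subset[of "{0..c} \<times> {0..t1}"]) (auto intro: bounded_Times)
  ultimately have "compact S" by (simp add: compact_eq_bounded_closed)
  then have cS: "compact (snd ` S)"
    by (rule compact_continuous_image[rotated]) (intro continuous_intros)
  have "(\<theta>0, t1) \<in> S" unfolding S_def using \<theta>0 K' t1 by auto
  then have "snd ` S \<noteq> {}" by auto
  from compact_attains_inf[OF cS this] obtain ts where ts: "ts \<in> snd ` S"
    and tsmin: "\<And>y. y \<in> snd ` S \<Longrightarrow> ts \<le> y" by auto
  from ts obtain \<theta>s where \<theta>s: "(\<theta>s, ts) \<in> S" by auto
  then have tsr: "ts \<in> {0..t1}" "P \<theta>s ts \<ge> K'" "\<theta>s \<in> {0..c}" unfolding S_def by auto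
  have "ts \<noteq> 0" using tsr init[of \<theta>s] K' by auto
  then have tspos: "ts > 0" using tsr by auto
  have tsw: "ts \<in> {0..<\<omega>}" using tsr t1 by auto
  have "continuous_on {0..c} (\<lambda>\<theta>. P \<theta> ts)"
    by (rule continuous_on_compose2[OF cont, of _ "\<lambda>\<theta>. (\<theta>, ts)", simplified])
       (use tsw in \<open>auto intro!: continuous_intros\<close>)
  from continuous_attains_sup[OF compact_Icc _ this] c obtain \<theta>m where \<theta>m: "\<theta>m \<in> {0..c}"
    and mx: "\<And>y. y \<in> {0..c} \<Longrightarrow> P y ts \<le> P \<theta>m ts" by auto
  have gmx: "P \<phi> ts \<le> P \<theta>m ts" for \<phi>
  proof -
    obtain y where "y \<in> {0..c}" "P \<phi> ts = P y ts"
      using periodic_reduce[of "\<lambda>x. P x ts" c \<phi>] per tsw c by auto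
    then show ?thesis using mx by auto
  qed
  have Pm: "P \<theta>m ts \<ge> K'" using mx[OF tsr(3)] tsr by auto
  have neg: "P' \<theta>m ts < 0"
    using key[of ts \<theta>m] tspos tsw gmx Pm K' by auto
  from has_real_derivative_neg_dec_left[OF der[OF tsw] neg] obtain d where d: "d > 0"
    "\<And>h. h > 0 \<Longrightarrow> ts - h \<in> {0..<\<omega>} \<Longrightarrow> h < d \<Longrightarrow> P \<theta>m ts < P \<theta>m (ts - h)" by auto
  define h where "h = min d ts / 2"
  have h: "h > 0" "h < d" "h < ts" using d tspos unfolding h_def by auto
  have "P \<theta>m (ts - h) > K'" using d(2)[of h] h Pm tsw by auto
  then have "(\<theta>m, ts - h) \<in> S" unfolding S_def using \<theta>m h tsr by auto
  then have "ts \<le> ts - h" using tsmin by force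
  then show False using h by simp
qed




lemma sq_rot: "((a::real) * c - b * s)\<^sup>2 + (a * s + b * c)\<^sup>2 = (b\<^sup>2 + a\<^sup>2) * (s\<^sup>2 + c\<^sup>2)"
  by (simp add: power2_eq_square algebra_simps)

locale pf =
  fixes D :: "nat \<Rightarrow> nat \<Rightarrow> real \<Rightarrow> real \<Rightarrow> real" and \<omega> :: real
  assumes omega_pos: "\<omega> > 0"
    and sm: "smooth_partials \<omega> (D 0 0) D"
    and per: "\<And>\<theta> t. t \<in> {0..<\<omega>} \<Longrightarrow> D 0 0 (\<theta> + 2*pi) t = D 0 0 \<theta> t"
    and pos: "\<And>\<theta> t. t \<in> {0..<\<omega>} \<Longrightarrow> D 0 0 \<theta> t > 0"
    and pde: "\<And>\<theta> t. t \<in> {0..<\<omega>} \<Longrightarrow>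
       D 0 1 \<theta> t =
         D 2 0 \<theta> t / (polar_g D \<theta> t)\<^sup>2
         - 2 * (D 1 0 \<theta> t)\<^sup>2 / (D 0 0 \<theta> t * (polar_g D \<theta> t)\<^sup>2)
         - D 0 0 \<theta> t / (polar_g D \<theta> t)\<^sup>2
         + 2 * pi * polar_g D \<theta> t / (D 0 0 \<theta> t * polar_length D t)"
begin

lemma dth: "t \<in> {0..<\<omega>} \<Longrightarrow> ((\<lambda>x. D i j x t) has_real_derivative D (Suc i) j \<theta> t) (at \<theta>)"
  using sm unfolding smooth_partials_def by blast

lemma dt: "t \<in> {0..<\<omega>} \<Longrightarrow> ((\<lambda>s. D i j \<theta> s) has_real_derivative D i (Suc j) \<theta> t) (at t within {0..<\<omega>})"
  using sm unfolding smooth_partials_def by blast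

lemma cont: "continuous_on (UNIV \<times> {0..<\<omega>}) (\<lambda>(\<theta>, t). D i j \<theta> t)"
  using sm unfolding smooth_partials_def by blast

lemma cont_th: "t \<in> {0..<\<omega>} \<Longrightarrow> continuous_on S (\<lambda>\<theta>. D i j \<theta> t)"
  by (rule continuous_on_compose2[OF cont, of _ "\<lambda>\<theta>. (\<theta>, t)", simplified])
     (auto intro!: continuous_intros)

lemma cont_swap: "T \<subseteq> {0..<\<omega>} \<Longrightarrow> continuous_on (T \<times> S) (\<lambda>x. D i j (snd x) (fst x))"
  by (rule continuous_on_compose2[OF cont, of _ "\<lambda>x. (snd x, fst x)", simplified])
     (auto intro!: continuous_intros)

lemma perD: "t \<in> {0..<\<omega>} \<Longrightarrow> D i 0 (\<theta> + 2*pi) t = D i 0 \<theta> t"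
proof (induction i arbitrary: \<theta>)
  case 0
  then show ?case using per by simp
next
  case (Suc i)
  have "((\<lambda>x. D i 0 (x + 2*pi) t) has_real_derivative D (Suc i) 0 (\<theta> + 2*pi) t * 1) (at \<theta>)"
    by (rule DERIV_chain2[where f="\<lambda>x. D i 0 x t"], rule dth[OF Suc.prems])
       (auto intro!: derivative_eq_intros)
  moreover have "(\<lambda>x. D i 0 (x + 2*pi) t) = (\<lambda>x. D i 0 x t)" using Suc by auto
  ultimately have "((\<lambda>x. D i 0 x t) has_real_derivative D (Suc i) 0 (\<theta> + 2*pi) t) (at \<theta>)" by simp
  from DERIV_unique[OF this dth[OF Suc.prems]] show ?case .
qed

lemma g_sq: "(polar_g D \<theta> t)\<^sup>2 = (D 0 0 \<theta> t)\<^sup>2 + (D 1 0 \<theta> t)\<^sup>2"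
  unfolding polar_g_def by simp

lemma g_ge: "t \<in> {0..<\<omega>} \<Longrightarrow> polar_g D \<theta> t \<ge> D 0 0 \<theta> t"
  unfolding polar_g_def using pos[of t \<theta>] by (simp add: real_le_rsqrt)

lemma g_pos: "t \<in> {0..<\<omega>} \<Longrightarrow> polar_g D \<theta> t > 0"
  using g_ge[of t \<theta>] pos[of t \<theta>] by linarith

lemma g_per: "t \<in> {0..<\<omega>} \<Longrightarrow> polar_g D (\<theta> + 2*pi) t = polar_g D \<theta> t"
  unfolding polar_g_def using perD by simp

lemma g_cont: "t \<in> {0..<\<omega>} \<Longrightarrow> continuous_on S (\<lambda>\<theta>. polar_g D \<theta> t)"
  unfolding polar_g_def by (intro continuous_intros cont_th)

lemma g_int: "t \<in> {0..<\<omega>} \<Longrightarrow> (\<lambda>\<theta>. polar_g D \<theta> t) integrable_on {a..b}"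
  by (intro integrable_continuous_interval g_cont)

lemma chord:
  assumes t: "t \<in> {0..<\<omega>}" and ab: "a \<le> b"
  defines "X \<equiv> \<lambda>\<theta>. (D 0 0 \<theta> t * cos \<theta>, D 0 0 \<theta> t * sin \<theta>)"
  shows "norm (X b - X a) \<le> integral {a..b} (\<lambda>\<theta>. polar_g D \<theta> t)"
proof -
  define X' where "X' = (\<lambda>\<theta>. (D 1 0 \<theta> t * cos \<theta> - D 0 0 \<theta> t * sin \<theta>,
                              D 1 0 \<theta> t * sin \<theta> + D 0 0 \<theta> t * cos \<theta>))"
  have d1: "((\<lambda>\<theta>. D 0 0 \<theta> t * cos \<theta>) has_real_derivative
      (D 1 0 \<theta> t * cos \<theta> - D 0 0 \<theta> t * sin \<theta>)) (at \<theta>)" for \<theta>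
    by (auto intro!: derivative_eq_intros dth[OF t])
  have d2: "((\<lambda>\<theta>. D 0 0 \<theta> t * sin \<theta>) has_real_derivative
      (D 1 0 \<theta> t * sin \<theta> + D 0 0 \<theta> t * cos \<theta>)) (at \<theta>)" for \<theta>
    by (auto intro!: derivative_eq_intros dth[OF t])
  have d: "(X has_vector_derivative X' \<theta>) (at \<theta> within {a..b})" for \<theta>
    unfolding X_def X'_def
    apply (rule has_vector_derivative_at_within)
    apply (rule has_vector_derivative_Pair)
    using d1 d2 by (auto simp: has_real_derivative_iff_has_vector_derivative)
  have nX': "norm (X' \<theta>) = polar_g D \<theta> t" for \<theta>
  proof -
    have "(D 1 0 \<theta> t * cos \<theta> - D 0 0 \<theta> t * sin \<theta>)\<^sup>2 + (D 1 0 \<theta> t * sin \<theta> + D 0 0 \<theta> t * cos \<theta>)\<^sup>2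
       = (D 0 0 \<theta> t)\<^sup>2 + (D 1 0 \<theta> t)\<^sup>2"
    proof -
      have "(D 1 0 \<theta> t * cos \<theta> - D 0 0 \<theta> t * sin \<theta>)\<^sup>2 + (D 1 0 \<theta> t * sin \<theta> + D 0 0 \<theta> t * cos \<theta>)\<^sup>2
       = ((D 0 0 \<theta> t)\<^sup>2 + (D 1 0 \<theta> t)\<^sup>2) * ((sin \<theta>)\<^sup>2 + (cos \<theta>)\<^sup>2)"
        by (rule sq_rot)
      then show ?thesis by simp
    qed
    then show ?thesis unfolding X'_def polar_g_def norm_Pair by simp
  qed
  have ftc: "(X' has_integral (X b - X a)) {a..b}"
    by (rule fundamental_theorem_of_calculus[OF ab d])
  have "norm (integral {a..b} X') \<le> integral {a..b} (\<lambda>\<theta>. polar_g D \<theta> t)"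
    by (rule Henstock_Kurzweil_Integration.integral_norm_bound_integral)
       (use ftc g_int[OF t] nX' in auto)
  then show ?thesis using ftc by (simp add: integral_unique)
qed

end



lemma sq_scale: "(- ((R::real) * c))\<^sup>2 + (- (R * s))\<^sup>2 = R\<^sup>2 * (s\<^sup>2 + c\<^sup>2)"
  by (simp add: power2_eq_square algebra_simps)

context pf begin

lemma X_eq0:
  assumes t: "t \<in> {0..<\<omega>}"
  shows "(D 0 0 (2*pi) t * cos (2*pi), D 0 0 (2*pi) t * sin (2*pi)) = (D 0 0 0 t * cos 0, D 0 0 0 t * sin 0)"
  using per[OF t, of 0] by simp

lemma opp_norm:
  fixes r0 r1 x :: real
  assumes "r0 > 0" "r1 > 0"
  shows "norm ((r1 * cos (x + pi), r1 * sin (x + pi)) - (r0 * cos x, r0 * sin x)) = r0 + r1"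
proof -
  have "(r1 * cos (x + pi), r1 * sin (x + pi)) - (r0 * cos x, r0 * sin x) = (- ((r0 + r1) * cos x), - ((r0 + r1) * sin x))"
    by (simp add: algebra_simps)
  moreover have "sqrt ((- ((r0 + r1) * cos x))\<^sup>2 + (- ((r0 + r1) * sin x))\<^sup>2) = r0 + r1"
  proof -
    have "(- ((r0 + r1) * cos x))\<^sup>2 + (- ((r0 + r1) * sin x))\<^sup>2 = (r0 + r1)\<^sup>2 * ((sin x)\<^sup>2 + (cos x)\<^sup>2)"
      by (rule sq_scale)
    then show ?thesis using assms by simp
  qed
  ultimately show ?thesis by (simp add: norm_Pair)
qed

lemma two_r_le_half:
  assumes t: "t \<in> {0..<\<omega>}" and th: "\<theta>0 \<in> {0..pi}"
  shows "2 * (D 0 0 \<theta>0 t + D 0 0 (\<theta>0 + pi) t) \<le> polar_length D t"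
proof -
  define X where "X = (\<lambda>\<theta>. (D 0 0 \<theta> t * cos \<theta>, D 0 0 \<theta> t * sin \<theta>))"
  define I where "I = (\<lambda>a b. integral {a..b} (\<lambda>\<theta>. polar_g D \<theta> t))"
  define \<theta>1 where "\<theta>1 = \<theta>0 + pi"
  have o: "0 \<le> \<theta>0" "\<theta>0 \<le> \<theta>1" "\<theta>1 \<le> 2*pi" using th unfolding \<theta>1_def by auto
  have c1: "norm (X \<theta>0 - X 0) \<le> I 0 \<theta>0" unfolding X_def I_def by (rule chord[OF t o(1)])
  have c2: "norm (X \<theta>1 - X \<theta>0) \<le> I \<theta>0 \<theta>1" unfolding X_def I_def by (rule chord[OF t o(2)])
  have c3: "norm (X (2*pi) - X \<theta>1) \<le> I \<theta>1 (2*pi)" unfolding X_def I_def by (rule chord[OF t o(3)])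
  have X0: "X (2*pi) = X 0" unfolding X_def using X_eq0[OF t] by simp
  have "X \<theta>1 - X \<theta>0 = - ((X \<theta>0 - X 0) + (X (2*pi) - X \<theta>1))" using X0 by (simp add: algebra_simps)
  then have "norm (X \<theta>1 - X \<theta>0) \<le> norm (X \<theta>0 - X 0) + norm (X (2*pi) - X \<theta>1)"
    by (metis norm_minus_cancel norm_triangle_ineq)
  then have "norm (X \<theta>1 - X \<theta>0) \<le> I 0 \<theta>0 + I \<theta>1 (2*pi)" using c1 c3 by linarith
  moreover have "I 0 \<theta>0 + I \<theta>0 \<theta>1 + I \<theta>1 (2*pi) = polar_length D t"
  proof -
    have "I 0 \<theta>0 + I \<theta>0 \<theta>1 = I 0 \<theta>1" unfolding I_def
      by (rule Henstock_Kurzweil_Integration.integral_combine) (use o g_int[OF t] in auto)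
    moreover have "I 0 \<theta>1 + I \<theta>1 (2*pi) = I 0 (2*pi)" unfolding I_def
      by (rule Henstock_Kurzweil_Integration.integral_combine) (use o g_int[OF t] in auto)
    ultimately show ?thesis unfolding polar_length_def I_def by simp
  qed
  moreover have "norm (X \<theta>1 - X \<theta>0) = D 0 0 \<theta>0 t + D 0 0 (\<theta>0 + pi) t"
    unfolding X_def \<theta>1_def by (rule opp_norm) (use pos[OF t] in auto)
  ultimately show ?thesis using c2 unfolding \<theta>1_def by (smt (verit))
qed

lemma r_le_half:
  assumes t: "t \<in> {0..<\<omega>}"
  shows "2 * D 0 0 \<theta> t < polar_length D t"
proof -
  obtain \<theta>0 where th0: "\<theta>0 \<in> {0..2*pi}" "D 0 0 \<theta> t = D 0 0 \<theta>0 t"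
    using periodic_reduce[of "\<lambda>x. D 0 0 x t" "2*pi" \<theta>] per[OF t] by auto
  show ?thesis
  proof (cases "\<theta>0 \<le> pi")
    case True
    then show ?thesis using two_r_le_half[OF t, of \<theta>0] th0 pos[OF t, of "\<theta>0 + pi"] by auto
  next
    case False
    then have "\<theta>0 - pi \<in> {0..pi}" using th0 by auto
    from two_r_le_half[OF t this] show ?thesis using th0 pos[OF t, of "\<theta>0 - pi"] by auto
  qed
qed

lemma L_pos: "t \<in> {0..<\<omega>} \<Longrightarrow> polar_length D t > 0"
  using r_le_half[of t 0] pos[of t 0] by linarith

end



lemma alg_L:
  fixes r p q s s1 G a :: real
  assumes r: "r > 0" and G: "G > 0" and G2: "G\<^sup>2 = r\<^sup>2 + p\<^sup>2"
    and s: "s = q / G\<^sup>2 - 2 * p\<^sup>2 / (r * G\<^sup>2) - r / G\<^sup>2 + a * G / r"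
  shows "(r * s + p * s1) / G \<le>
    ((q * s + p * s1) / G - p * s * (r * p + p * q) / G^3 + a * (q * r - p\<^sup>2) / G\<^sup>2) - a + a\<^sup>2 * G"
proof -
  define N where "N = r\<^sup>2 + p\<^sup>2"
  have N: "N > 0" unfolding N_def using r by (simp add: add_pos_nonneg)
  have G2': "G\<^sup>2 = N" using G2 N_def by simp
  define k where "k = (r\<^sup>2 + 2 * p\<^sup>2 - q * r) / (G * N)"
  have G3: "G^3 = G * N" using G2' by (simp add: power3_eq_cube power2_eq_square)
  have Gne: "G \<noteq> 0" "N \<noteq> 0" using G N by auto
  have e1a: "(q * s + p * s1) / G - p * s * (r * p + p * q) / (G * N) - (r * s + p * s1) / G
     = s * ((q - r) * N - p\<^sup>2 * (r + q)) / (G * N)"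
    using Gne by (simp add: field_simps power2_eq_square)
  have e1b: "(q - r) * N - p\<^sup>2 * (r + q) = - r * (r\<^sup>2 + 2 * p\<^sup>2 - q * r)"
    unfolding N_def by (simp add: algebra_simps power2_eq_square)
  have e1: "(q * s + p * s1) / G - p * s * (r * p + p * q) / G^3 - (r * s + p * s1) / G = - s * r * k"
    unfolding G3 e1a e1b k_def by simp
  have e2a: "s * r = (q * r - 2 * p\<^sup>2 - r\<^sup>2) / N + a * G"
    unfolding s G2' using Gne r by (simp add: field_simps power2_eq_square)
  have e2b: "(q * r - 2 * p\<^sup>2 - r\<^sup>2) / N = - G * k"
    unfolding k_def using Gne by (simp add: field_simps)
  have e2: "s * r = - G * (k - a)" using e2a e2b by (simp add: algebra_simps)
  have e3a: "a * (q * r - p\<^sup>2) / G\<^sup>2 - a = a * (q * r - p\<^sup>2 - N) / N"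
    unfolding G2' using Gne by (simp add: field_simps)
  have e3b: "q * r - p\<^sup>2 - N = q * r - 2 * p\<^sup>2 - r\<^sup>2" unfolding N_def by simp
  have e3: "a * (q * r - p\<^sup>2) / G\<^sup>2 - a = - a * G * k"
  proof -
    have "a * (q * r - p\<^sup>2) / G\<^sup>2 - a = a * ((q * r - 2 * p\<^sup>2 - r\<^sup>2) / N)"
      unfolding e3a e3b by simp
    also have "\<dots> = - a * G * k" unfolding e2b by simp
    finally show ?thesis .
  qed
  have "((q * s + p * s1) / G - p * s * (r * p + p * q) / G^3 + a * (q * r - p\<^sup>2) / G\<^sup>2) - a + a\<^sup>2 * G
        - (r * s + p * s1) / G = - s * r * k - a * G * k + a\<^sup>2 * G"
    using e1 e3 by (simp add: algebra_simps)
  also have "\<dots> = - (s * r) * k - a * G * k + a\<^sup>2 * G" by simp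
  also have "\<dots> = G * (k - a)\<^sup>2" unfolding e2 by (simp add: algebra_simps power2_eq_square)
  also have "\<dots> \<ge> 0" using G by simp
  finally show ?thesis by simp
qed

lemma hderiv_alg:
  fixes r p q s s1 G a :: real
  assumes r: "r > 0" and G: "G > 0" and G2: "G\<^sup>2 = r\<^sup>2 + p\<^sup>2"
  shows "((q * s + s1 * p) * G - p * s * (r * p + p * q) / G) / (G * G) +
        inverse (1 + (p / r)\<^sup>2) * (q * r - p * p) * a / (r * r) =
        (q * s + p * s1) / G - p * s * (r * p + p * q) / G ^ 3 + a * (q * r - p\<^sup>2) / G\<^sup>2"
proof -
  have e1: "((q * s + s1 * p) * G - p * s * (r * p + p * q) / G) / (G * G) =
     (q * s + p * s1) / G - p * s * (r * p + p * q) / G ^ 3"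
    using G by (simp add: field_simps power3_eq_cube)
  have "1 + (p / r)\<^sup>2 = G\<^sup>2 / r\<^sup>2" using r G2 by (simp add: field_simps)
  then have "inverse (1 + (p / r)\<^sup>2) = r\<^sup>2 / G\<^sup>2" by simp
  then have e2: "inverse (1 + (p / r)\<^sup>2) * (q * r - p * p) * a / (r * r) = a * (q * r - p\<^sup>2) / G\<^sup>2"
    using r G by (simp add: field_simps power2_eq_square)
  show ?thesis using e1 e2 by simp
qed

context pf begin

lemma dth0: "t \<in> {0..<\<omega>} \<Longrightarrow> ((\<lambda>x. D 0 j x t) has_real_derivative D 1 j \<theta> t) (at \<theta>)"
  using dth[of t 0 j \<theta>] by (simp add: One_nat_def)
lemma dth1: "t \<in> {0..<\<omega>} \<Longrightarrow> ((\<lambda>x. D 1 j x t) has_real_derivative D 2 j \<theta> t) (at \<theta>)"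
  using dth[of t 1 j \<theta>] by (simp add: numeral_2_eq_2)
lemma dth1s: "t \<in> {0..<\<omega>} \<Longrightarrow> ((\<lambda>x. D (Suc 0) j x t) has_real_derivative D 2 j \<theta> t) (at \<theta>)"
  using dth[of t 1 j \<theta>] by (simp add: numeral_2_eq_2)
lemma dth2: "t \<in> {0..<\<omega>} \<Longrightarrow> ((\<lambda>x. D 2 j x t) has_real_derivative D 3 j \<theta> t) (at \<theta>)"
  using dth[of t 2 j \<theta>] by (simp add: numeral_2_eq_2 numeral_3_eq_3)
lemma dt0: "t \<in> {0..<\<omega>} \<Longrightarrow> ((\<lambda>s. D i 0 \<theta> s) has_real_derivative D i 1 \<theta> t) (at t within {0..<\<omega>})"
  using dt[of t i 0 \<theta>] by (simp add: One_nat_def)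

lemma G_deriv:
  assumes t: "t \<in> {0..<\<omega>}"
  shows "((\<lambda>x. polar_g D x t) has_real_derivative
     (D 0 0 \<theta> t * D 1 0 \<theta> t + D 1 0 \<theta> t * D 2 0 \<theta> t) / polar_g D \<theta> t) (at \<theta>)"
proof -
  have p: "0 < (D 0 0 \<theta> t)\<^sup>2 + (D 1 0 \<theta> t)\<^sup>2" using pos[OF t, of \<theta>] by (simp add: add_pos_nonneg)
  show ?thesis unfolding polar_g_def
    using p apply (auto intro!: derivative_eq_intros dth0[OF t] dth1[OF t] dth1s[OF t])
    apply (simp add: divide_inverse algebra_simps)
    done
qed

lemma s_per:
  assumes t: "t \<in> {0..<\<omega>}"
  shows "D 0 1 (\<theta> + 2*pi) t = D 0 1 \<theta> t"
  using pde[OF t, of "\<theta> + 2*pi"] pde[OF t, of \<theta>] perD[OF t, of 0] perD[OF t, of 1] perD[OF t, of 2]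
    g_per[OF t] by simp

lemma h_deriv:
  assumes t: "t \<in> {0..<\<omega>}"
  shows "((\<lambda>x. D 1 0 x t * D 0 1 x t / polar_g D x t + a * arctan (D 1 0 x t / D 0 0 x t))
     has_real_derivative
      (D 2 0 \<theta> t * D 0 1 \<theta> t + D 1 0 \<theta> t * D 1 1 \<theta> t) / polar_g D \<theta> t
      - D 1 0 \<theta> t * D 0 1 \<theta> t * (D 0 0 \<theta> t * D 1 0 \<theta> t + D 1 0 \<theta> t * D 2 0 \<theta> t) / (polar_g D \<theta> t)^3
      + a * (D 2 0 \<theta> t * D 0 0 \<theta> t - (D 1 0 \<theta> t)\<^sup>2) / (polar_g D \<theta> t)\<^sup>2) (at \<theta>)"
proof -
  have r: "D 0 0 \<theta> t > 0" using pos[OF t] by simp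
  have G: "polar_g D \<theta> t > 0" using g_pos[OF t] by simp
  have G2: "(polar_g D \<theta> t)\<^sup>2 = (D 0 0 \<theta> t)\<^sup>2 + (D 1 0 \<theta> t)\<^sup>2" by (rule g_sq)
  show ?thesis
    using r G apply (auto intro!: derivative_eq_intros dth0[OF t] dth1[OF t] dth1s[OF t] G_deriv[OF t]
        DERIV_arctan[THEN DERIV_chain2])
    apply (rule hderiv_alg)
    using G2 by (auto simp: One_nat_def)
qed

lemma gt_cont:
  assumes t: "t \<in> {0..<\<omega>}"
  shows "continuous_on S (\<lambda>\<theta>. (D 0 0 \<theta> t * D 0 1 \<theta> t + D 1 0 \<theta> t * D 1 1 \<theta> t) / polar_g D \<theta> t)"
proof -
  have nz: "\<forall>\<theta>\<in>S. polar_g D \<theta> t \<noteq> 0" using g_pos[OF t] by (metis order_less_irrefl)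
  show ?thesis by (intro continuous_on_divide continuous_intros cont_th[OF t] g_cont[OF t] nz)
qed

lemma int_gt_nonpos:
  assumes t: "t \<in> {0..<\<omega>}"
  shows "integral {0..2*pi} (\<lambda>\<theta>. (D 0 0 \<theta> t * D 0 1 \<theta> t + D 1 0 \<theta> t * D 1 1 \<theta> t) / polar_g D \<theta> t) \<le> 0"
proof -
  define L where "L = polar_length D t"
  have Lpos: "L > 0" unfolding L_def by (rule L_pos[OF t])
  define a where "a = 2 * pi / L"
  define h where "h = (\<lambda>x. D 1 0 x t * D 0 1 x t / polar_g D x t + a * arctan (D 1 0 x t / D 0 0 x t))"
  define H where "H = (\<lambda>\<theta>. (D 2 0 \<theta> t * D 0 1 \<theta> t + D 1 0 \<theta> t * D 1 1 \<theta> t) / polar_g D \<theta> t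
      - D 1 0 \<theta> t * D 0 1 \<theta> t * (D 0 0 \<theta> t * D 1 0 \<theta> t + D 1 0 \<theta> t * D 2 0 \<theta> t) / (polar_g D \<theta> t)^3
      + a * (D 2 0 \<theta> t * D 0 0 \<theta> t - (D 1 0 \<theta> t)\<^sup>2) / (polar_g D \<theta> t)\<^sup>2)"
  define gt where "gt = (\<lambda>\<theta>. (D 0 0 \<theta> t * D 0 1 \<theta> t + D 1 0 \<theta> t * D 1 1 \<theta> t) / polar_g D \<theta> t)"
  have hd: "(h has_real_derivative H \<theta>) (at \<theta>)" for \<theta>
    unfolding h_def H_def by (rule h_deriv[OF t])
  have ftc: "(H has_integral (h (2*pi) - h 0)) {0..2*pi}"
  proof (rule fundamental_theorem_of_calculus)
    fix x assume "x \<in> {0..2*pi}"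
    show "(h has_vector_derivative H x) (at x within {0..2*pi})"
      using DERIV_subset[OF hd subset_UNIV] unfolding has_real_derivative_iff_has_vector_derivative .
  qed simp
  have h0: "h (2*pi) = h 0"
    unfolding h_def using perD[OF t, of 0 0] perD[OF t, of 1 0] s_per[OF t, of 0] g_per[OF t, of 0] by simp
  have gint: "((\<lambda>\<theta>. polar_g D \<theta> t) has_integral L) {0..2*pi}"
    unfolding L_def polar_length_def by (rule integrable_integral[OF g_int[OF t]])
  have rhs: "((\<lambda>\<theta>. H \<theta> - a + a\<^sup>2 * polar_g D \<theta> t) has_integral ((h (2*pi) - h 0) - 2 * pi * a + a\<^sup>2 * L)) {0..2*pi}"
    by (intro has_integral_add has_integral_diff ftc has_integral_mult_right gint)
       (use has_integral_const_real[of a 0 "2*pi"] in simp)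
  have zero: "(h (2*pi) - h 0) - 2 * pi * a + a\<^sup>2 * L = 0"
    unfolding h0 a_def using Lpos by (simp add: power2_eq_square field_simps)
  have le: "gt \<theta> \<le> H \<theta> - a + a\<^sup>2 * polar_g D \<theta> t" for \<theta>
  proof -
    have s: "D 0 1 \<theta> t = D 2 0 \<theta> t / (polar_g D \<theta> t)\<^sup>2 - 2 * (D 1 0 \<theta> t)\<^sup>2 / (D 0 0 \<theta> t * (polar_g D \<theta> t)\<^sup>2)
         - D 0 0 \<theta> t / (polar_g D \<theta> t)\<^sup>2 + a * polar_g D \<theta> t / D 0 0 \<theta> t"
      using pde[OF t, of \<theta>] unfolding a_def L_def by (simp add: field_simps)
    show ?thesis unfolding gt_def H_def
      by (rule alg_L[OF pos[OF t] g_pos[OF t] g_sq s])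
  qed
  have gtint: "gt integrable_on {0..2*pi}"
    unfolding gt_def by (rule integrable_continuous_interval[OF gt_cont[OF t]])
  have "integral {0..2*pi} gt \<le> (h (2*pi) - h 0) - 2 * pi * a + a\<^sup>2 * L"
    by (rule has_integral_le[OF integrable_integral[OF gtint] rhs]) (use le in auto)
  then show ?thesis using zero unfolding gt_def by simp
qed

end




context pf begin

lemma g_tderiv:
  assumes x: "x \<in> {0..<\<omega>}"
  shows "((\<lambda>s. polar_g D \<theta> s) has_real_derivative
     (D 0 0 \<theta> x * D 0 1 \<theta> x + D 1 0 \<theta> x * D 1 1 \<theta> x) / polar_g D \<theta> x) (at x within {0..<\<omega>})"
proof -
  have p: "0 < (D 0 0 \<theta> x)\<^sup>2 + (D 1 0 \<theta> x)\<^sup>2" using pos[OF x, of \<theta>] by (simp add: add_pos_nonneg)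
  show ?thesis unfolding polar_g_def
    using p apply (auto intro!: derivative_eq_intros dt0[OF x] dt[OF x])
    apply (simp add: divide_inverse algebra_simps)
    done
qed

lemma L_deriv:
  assumes x: "x \<in> {0..<\<omega>}"
  shows "((\<lambda>x. polar_length D x) has_real_derivative
     integral {0..2*pi} (\<lambda>\<theta>. (D 0 0 \<theta> x * D 0 1 \<theta> x + D 1 0 \<theta> x * D 1 1 \<theta> x) / polar_g D \<theta> x))
     (at x within {0..<\<omega>})"
  unfolding polar_length_def
proof (rule leibniz_rule_field_derivative[where a=0 and b="2*pi", unfolded cbox_interval])
  show "((\<lambda>x. polar_g D t x) has_field_derivative
      (D 0 0 t y * D 0 1 t y + D 1 0 t y * D 1 1 t y) / polar_g D t y) (at y within {0..<\<omega>})"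
    if "y \<in> {0..<\<omega>}" for y t using g_tderiv[OF that] .
  show "(\<lambda>\<theta>. polar_g D \<theta> y) integrable_on {0..2*pi}" if "y \<in> {0..<\<omega>}" for y
    using g_int[OF that] .
  have eq: "(\<lambda>(x, t). (D 0 0 t x * D 0 1 t x + D 1 0 t x * D 1 1 t x) / polar_g D t x) =
    (\<lambda>z. (D 0 0 (snd z) (fst z) * D 0 1 (snd z) (fst z) + D 1 0 (snd z) (fst z) * D 1 1 (snd z) (fst z)) /
        sqrt ((D 0 0 (snd z) (fst z))\<^sup>2 + (D 1 0 (snd z) (fst z))\<^sup>2))"
    unfolding polar_g_def by auto
  have nz: "\<forall>z\<in>{0..<\<omega>} \<times> {0..2*pi}. sqrt ((D 0 0 (snd z) (fst z))\<^sup>2 + (D 1 0 (snd z) (fst z))\<^sup>2) \<noteq> 0"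
  proof
    fix z :: "real \<times> real" assume "z \<in> {0..<\<omega>} \<times> {0..2*pi}"
    then have "D 0 0 (snd z) (fst z) > 0" using pos by (cases z) auto
    then have sp: "0 < (D 0 0 (snd z) (fst z))\<^sup>2 + (D 1 0 (snd z) (fst z))\<^sup>2"
      by (intro add_pos_nonneg) auto
    show "sqrt ((D 0 0 (snd z) (fst z))\<^sup>2 + (D 1 0 (snd z) (fst z))\<^sup>2) \<noteq> 0"
      using real_sqrt_gt_zero[OF sp] by linarith
  qed
  show "continuous_on ({0..<\<omega>} \<times> {0..2*pi})
     (\<lambda>(x, t). (D 0 0 t x * D 0 1 t x + D 1 0 t x * D 1 1 t x) / polar_g D t x)"
    unfolding eq by (intro continuous_on_divide continuous_intros cont_swap nz order_refl)
  show "x \<in> {0..<\<omega>}" by (rule x)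
  show "convex {0..<\<omega>}" by (rule convex_real_interval)
qed

lemma L_mono:
  assumes t: "t \<in> {0..<\<omega>}"
  shows "polar_length D t \<le> polar_length D 0"
proof -
  define L' where "L' = (\<lambda>x. integral {0..2*pi} (\<lambda>\<theta>. (D 0 0 \<theta> x * D 0 1 \<theta> x + D 1 0 \<theta> x * D 1 1 \<theta> x) / polar_g D \<theta> x))"
  have t0: "0 \<le> t" using t by auto
  have "(L' has_integral (polar_length D t - polar_length D 0)) {0..t}"
  proof (rule fundamental_theorem_of_calculus[OF t0])
    fix x assume x: "x \<in> {0..t}"
    then have xw: "x \<in> {0..<\<omega>}" using t by auto
    have sub: "{0..t} \<subseteq> {0..<\<omega>}" using t by auto
    show "((\<lambda>x. polar_length D x) has_vector_derivative L' x) (at x within {0..t})"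
      using DERIV_subset[OF L_deriv[OF xw] sub] unfolding has_real_derivative_iff_has_vector_derivative L'_def .
  qed
  moreover have "((\<lambda>x. 0) has_integral 0) {0..t}" by (rule has_integral_0)
  ultimately have "polar_length D t - polar_length D 0 \<le> 0"
    by (rule has_integral_le) (use int_gt_nonpos t in \<open>auto simp: L'_def\<close>)
  then show ?thesis by simp
qed

lemma r_bound:
  assumes t: "t \<in> {0..<\<omega>}"
  shows "2 * D 0 0 \<theta> t < polar_length D 0"
  using r_le_half[OF t, of \<theta>] L_mono[OF t] by linarith

end




lemma crit_alg:
  fixes q3 p r G L :: real
  assumes r: "r > 0" and G: "G > 0" and L: "L > 0" and G2: "G\<^sup>2 = r\<^sup>2 + p\<^sup>2"
  shows "q3 * G\<^sup>2 / G ^ 4 +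
        2 * p\<^sup>2 * (p * G\<^sup>2 + 2 * (r * p) * r) / (r * G\<^sup>2 * (r * G\<^sup>2)) -
        (p * G\<^sup>2 - r * (2 * (r * p))) / G ^ 4 +
        (r * p * (2 * pi) * (r * L) / G - 2 * pi * G * (p * L)) / (r * L * (r * L)) =
        q3 / G\<^sup>2 + p * (2 * p ^ 4 + 5 * r\<^sup>2 * p\<^sup>2 + r ^ 4 - 2 * pi * p\<^sup>2 * G ^ 3 / L) / (r\<^sup>2 * G ^ 4)"
proof -
  define N where "N = r\<^sup>2 + p\<^sup>2"
  have N: "N > 0" unfolding N_def using r by (simp add: add_pos_nonneg)
  have G2': "G\<^sup>2 = N" using G2 N_def by simp
  have G4: "G ^ 4 = N\<^sup>2" using G2' by (metis power_mult numeral_Bit0 mult_2_right power2_eq_square power_add)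
  have G3: "G ^ 3 = G * N" using G2' by (simp add: power3_eq_cube power2_eq_square)
  have h1: "q3 * G\<^sup>2 / G ^ 4 = q3 / N" unfolding G2' G4 using N by (simp add: power2_eq_square)
  have h2: "2 * p\<^sup>2 * (p * G\<^sup>2 + 2 * (r * p) * r) / (r * G\<^sup>2 * (r * G\<^sup>2)) = 2 * p^3 * (N + 2 * r\<^sup>2) / (r\<^sup>2 * N\<^sup>2)"
    unfolding G2' using N r by (simp add: field_simps power2_eq_square power3_eq_cube)
  have h3: "(p * G\<^sup>2 - r * (2 * (r * p))) / G ^ 4 = p * (N - 2 * r\<^sup>2) / N\<^sup>2"
    unfolding G2' G4 by (simp add: power2_eq_square algebra_simps)
  have h4: "(r * p * (2 * pi) * (r * L) / G - 2 * pi * G * (p * L)) / (r * L * (r * L)) = 2 * pi * p * (r\<^sup>2 - N) / (G * r\<^sup>2 * L)"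
  proof -
    have "r * p * (2 * pi) * (r * L) / G - 2 * pi * G * (p * L) = 2 * pi * p * L * (r\<^sup>2 - G\<^sup>2) / G"
      using G by (simp add: field_simps power2_eq_square)
    then show ?thesis unfolding G2' using r L G by (simp add: field_simps power2_eq_square)
  qed
  have h5: "p * (2 * p ^ 4 + 5 * r\<^sup>2 * p\<^sup>2 + r ^ 4 - 2 * pi * p\<^sup>2 * G ^ 3 / L) / (r\<^sup>2 * G ^ 4)
     = p * (2 * p ^ 4 + 5 * r\<^sup>2 * p\<^sup>2 + r ^ 4) / (r\<^sup>2 * N\<^sup>2) - 2 * pi * p ^ 3 / (G * r\<^sup>2 * L)"
    unfolding G3 G4 using r L G N G2'[unfolded power2_eq_square, symmetric] by (simp add: field_simps power2_eq_square power3_eq_cube)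
  have h6: "2 * p^3 * (N + 2 * r\<^sup>2) / (r\<^sup>2 * N\<^sup>2) - p * (N - 2 * r\<^sup>2) / N\<^sup>2 =
     p * (2 * p ^ 4 + 5 * r\<^sup>2 * p\<^sup>2 + r ^ 4) / (r\<^sup>2 * N\<^sup>2)"
  proof -
    have E: "2 * p^3 * (N + 2 * r\<^sup>2) - r\<^sup>2 * p * (N - 2 * r\<^sup>2) = p * (2 * p ^ 4 + 5 * r\<^sup>2 * p\<^sup>2 + r ^ 4)"
      unfolding N_def by (simp add: algebra_simps power2_eq_square power3_eq_cube power4_eq_xxxx)
    have A: "p * (N - 2 * r\<^sup>2) / N\<^sup>2 = r\<^sup>2 * p * (N - 2 * r\<^sup>2) / (r\<^sup>2 * N\<^sup>2)"
      using r by simp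
    have "2 * p^3 * (N + 2 * r\<^sup>2) / (r\<^sup>2 * N\<^sup>2) - p * (N - 2 * r\<^sup>2) / N\<^sup>2
       = 2 * p^3 * (N + 2 * r\<^sup>2) / (r\<^sup>2 * N\<^sup>2) - r\<^sup>2 * p * (N - 2 * r\<^sup>2) / (r\<^sup>2 * N\<^sup>2)"
      by (simp only: A)
    also have "\<dots> = (2 * p^3 * (N + 2 * r\<^sup>2) - r\<^sup>2 * p * (N - 2 * r\<^sup>2)) / (r\<^sup>2 * N\<^sup>2)"
      by (rule diff_divide_distrib[symmetric])
    also have "\<dots> = p * (2 * p ^ 4 + 5 * r\<^sup>2 * p\<^sup>2 + r ^ 4) / (r\<^sup>2 * N\<^sup>2)" by (simp only: E)
    finally show ?thesis .
  qed
  have h7: "2 * pi * p * (r\<^sup>2 - N) / (G * r\<^sup>2 * L) = - 2 * pi * p ^ 3 / (G * r\<^sup>2 * L)"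
    unfolding N_def by (simp add: power3_eq_cube power2_eq_square)
  have "q3 * G\<^sup>2 / G ^ 4 +
        2 * p\<^sup>2 * (p * G\<^sup>2 + 2 * (r * p) * r) / (r * G\<^sup>2 * (r * G\<^sup>2)) -
        (p * G\<^sup>2 - r * (2 * (r * p))) / G ^ 4 +
        (r * p * (2 * pi) * (r * L) / G - 2 * pi * G * (p * L)) / (r * L * (r * L))
      = q3 / N + 2 * p^3 * (N + 2 * r\<^sup>2) / (r\<^sup>2 * N\<^sup>2) - p * (N - 2 * r\<^sup>2) / N\<^sup>2
        + - 2 * pi * p ^ 3 / (G * r\<^sup>2 * L)"
    by (simp only: h1 h2 h3 h4 h7)
  also have "\<dots> = q3 / N + (2 * p^3 * (N + 2 * r\<^sup>2) / (r\<^sup>2 * N\<^sup>2) - p * (N - 2 * r\<^sup>2) / N\<^sup>2)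
        - 2 * pi * p ^ 3 / (G * r\<^sup>2 * L)" by simp
  also have "\<dots> = q3 / N + p * (2 * p ^ 4 + 5 * r\<^sup>2 * p\<^sup>2 + r ^ 4) / (r\<^sup>2 * N\<^sup>2)
        - 2 * pi * p ^ 3 / (G * r\<^sup>2 * L)" by (simp only: h6)
  also have "\<dots> = q3 / G\<^sup>2 + p * (2 * p ^ 4 + 5 * r\<^sup>2 * p\<^sup>2 + r ^ 4 - 2 * pi * p\<^sup>2 * G ^ 3 / L) / (r\<^sup>2 * G ^ 4)"
    by (simp only: h5 G2')
  finally show ?thesis .
qed

lemma B_neg:
  fixes p r G L :: real
  assumes r: "r > 0" and G: "G > 0" and L: "L > 0" and G2: "G\<^sup>2 = r\<^sup>2 + p\<^sup>2"
    and rL: "2 * r < L" and pL: "3 * L / pi < \<bar>p\<bar>"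
  shows "2 * p ^ 4 + 5 * r\<^sup>2 * p\<^sup>2 + r ^ 4 - 2 * pi / L * p\<^sup>2 * G ^ 3 < 0"
proof -
  define P where "P = \<bar>p\<bar>"
  have pP2: "p\<^sup>2 = P\<^sup>2" "p ^ 4 = P ^ 4" unfolding P_def by (simp_all add: power_even_abs)
  have pL': "3 * L < pi * P" using pL unfolding P_def by (metis divide_less_eq mult.commute pi_gt_zero)
  have P: "P > 0" using pL L P_def by (smt (verit) divide_pos_pos pi_gt_zero)
  have aP: "2 * pi / L * P > 6"
  proof -
    have "2 * pi / L * P = 2 * (pi * P) / L" by simp
    moreover have "6 < 2 * (pi * P) / L" by (subst pos_less_divide_eq[OF L]) (use pL' in linarith)
    ultimately show ?thesis by simp
  qed
  have GP: "P \<le> G"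
  proof (rule power2_le_imp_le)
    show "P\<^sup>2 \<le> G\<^sup>2" using G2 pP2 by simp
  qed (use G in simp)
  have G3: "P ^ 3 \<le> G ^ 3" using GP P by (intro power_mono) auto
  have a0: "2 * pi / L > 0" using L by simp
  have "2 * pi / L * p\<^sup>2 * G ^ 3 \<ge> 2 * pi / L * P\<^sup>2 * P ^ 3"
    unfolding pP2 using G3 a0 P L by (intro mult_left_mono) auto
  moreover have "2 * pi / L * P\<^sup>2 * P ^ 3 = (2 * pi / L * P) * P ^ 4"
    by (simp add: power2_eq_square power3_eq_cube power4_eq_xxxx)
  moreover have "(2 * pi / L * P) * P ^ 4 > 6 * P ^ 4"
    using mult_strict_right_mono[OF aP, of "P ^ 4"] P by (simp only: zero_less_power)
  ultimately have big: "2 * pi / L * p\<^sup>2 * G ^ 3 > 6 * P ^ 4" by linarith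
  have rP: "r < 2 / 3 * P"
  proof -
    have "3 * L < pi * P" by (rule pL')
    then have "6 * r < pi * P" using rL by linarith
    moreover have "pi * P < 4 * P" using pi_less_4 P by simp
    ultimately show ?thesis by simp
  qed
  have r2: "r\<^sup>2 \<le> 4 / 9 * P\<^sup>2"
  proof -
    have "r\<^sup>2 \<le> (2 / 3 * P)\<^sup>2" using rP r by (intro power_mono) auto
    then show ?thesis by (simp add: power2_eq_square)
  qed
  have r4: "r ^ 4 \<le> 16 / 81 * P ^ 4"
  proof -
    have "r ^ 4 \<le> (2 / 3 * P) ^ 4" using rP r by (intro power_mono) auto
    then show ?thesis by (simp add: power4_eq_xxxx)
  qed
  have "5 * r\<^sup>2 * p\<^sup>2 \<le> 5 * (4 / 9 * P\<^sup>2) * P\<^sup>2" unfolding pP2 using r2 by (intro mult_right_mono) auto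
  also have "\<dots> = 20 / 9 * P ^ 4" by (simp add: power2_eq_square power4_eq_xxxx)
  finally have m: "5 * r\<^sup>2 * p\<^sup>2 \<le> 20 / 9 * P ^ 4" .
  have "P ^ 4 > 0" using P by simp
  then show ?thesis using big m r4 pP2 by linarith
qed

context pf begin

lemma deriv_at_crit:
  assumes t: "t \<in> {0..<\<omega>}" and q0: "D 2 0 \<theta> t = 0"
  shows "D 1 1 \<theta> t = D 3 0 \<theta> t / (polar_g D \<theta> t)\<^sup>2 + D 1 0 \<theta> t *
     (2 * (D 1 0 \<theta> t)^4 + 5 * (D 0 0 \<theta> t)\<^sup>2 * (D 1 0 \<theta> t)\<^sup>2 + (D 0 0 \<theta> t)^4
      - 2 * pi / polar_length D t * (D 1 0 \<theta> t)\<^sup>2 * (polar_g D \<theta> t)^3)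
     / ((D 0 0 \<theta> t)\<^sup>2 * (polar_g D \<theta> t)^4)"
proof -
  define F where "F = (\<lambda>x. D 2 0 x t / (polar_g D x t)\<^sup>2
         - 2 * (D 1 0 x t)\<^sup>2 / (D 0 0 x t * (polar_g D x t)\<^sup>2)
         - D 0 0 x t / (polar_g D x t)\<^sup>2
         + 2 * pi * polar_g D x t / (D 0 0 x t * polar_length D t))"
  have "(\<lambda>x. D 0 1 x t) = F" unfolding F_def using pde[OF t] by auto
  then have d1: "(F has_real_derivative D 1 1 \<theta> t) (at \<theta>)" using dth0[OF t, of 1 \<theta>] by simp
  have r: "D 0 0 \<theta> t > 0" using pos[OF t] by simp
  have G: "polar_g D \<theta> t > 0" using g_pos[OF t] by simp
  have L: "polar_length D t > 0" using L_pos[OF t] by simp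
  have "(F has_real_derivative D 3 0 \<theta> t / (polar_g D \<theta> t)\<^sup>2 + D 1 0 \<theta> t *
     (2 * (D 1 0 \<theta> t)^4 + 5 * (D 0 0 \<theta> t)\<^sup>2 * (D 1 0 \<theta> t)\<^sup>2 + (D 0 0 \<theta> t)^4
      - 2 * pi / polar_length D t * (D 1 0 \<theta> t)\<^sup>2 * (polar_g D \<theta> t)^3)
     / ((D 0 0 \<theta> t)\<^sup>2 * (polar_g D \<theta> t)^4)) (at \<theta>)"
    unfolding F_def
    using r G L q0 apply (auto intro!: derivative_eq_intros dth0[OF t] dth1[OF t] dth1s[OF t] dth2[OF t] G_deriv[OF t])
    apply (rule crit_alg)
    using g_sq[of \<theta> t] by (auto simp: One_nat_def)
  from DERIV_unique[OF d1 this] show ?thesis .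
qed

end




context pf begin

lemma crit_common:
  assumes t: "t \<in> {0..<\<omega>}" and q0: "D 2 0 \<theta> t = 0"
    and K: "3 * polar_length D 0 / pi \<le> K" and pK: "K < \<bar>D 1 0 \<theta> t\<bar>"
    and that: "B = 2 * (D 1 0 \<theta> t)^4 + 5 * (D 0 0 \<theta> t)\<^sup>2 * (D 1 0 \<theta> t)\<^sup>2 + (D 0 0 \<theta> t)^4
      - 2 * pi / polar_length D t * (D 1 0 \<theta> t)\<^sup>2 * (polar_g D \<theta> t)^3"
  shows "D 1 1 \<theta> t = D 3 0 \<theta> t / (polar_g D \<theta> t)\<^sup>2 + D 1 0 \<theta> t * B / ((D 0 0 \<theta> t)\<^sup>2 * (polar_g D \<theta> t)^4)
    \<and> B < 0"
proof
  show "D 1 1 \<theta> t = D 3 0 \<theta> t / (polar_g D \<theta> t)\<^sup>2 + D 1 0 \<theta> t * B / ((D 0 0 \<theta> t)\<^sup>2 * (polar_g D \<theta> t)^4)"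
    using deriv_at_crit[OF t q0] that by simp
  have LL: "polar_length D t \<le> polar_length D 0" by (rule L_mono[OF t])
  have "3 * polar_length D t / pi \<le> 3 * polar_length D 0 / pi"
    using LL pi_gt_zero by (simp add: divide_right_mono)
  then have pL: "3 * polar_length D t / pi < \<bar>D 1 0 \<theta> t\<bar>" using K pK by linarith
  show "B < 0" unfolding that
    by (rule B_neg[OF pos[OF t] g_pos[OF t] L_pos[OF t] g_sq r_le_half[OF t] pL])
qed

lemma key_max:
  assumes t: "t \<in> {0..<\<omega>}" and mx: "\<And>\<phi>. D 1 0 \<phi> t \<le> D 1 0 \<theta> t"
    and K: "3 * polar_length D 0 / pi \<le> K" and pK: "K < D 1 0 \<theta> t"
  shows "D 1 1 \<theta> t < 0"
proof -
  have L0: "polar_length D 0 > 0" using L_pos[of 0] omega_pos by simp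
  have K0: "K > 0" using K L0 pi_gt_zero by (smt (verit) divide_pos_pos)
  have p: "D 1 0 \<theta> t > 0" using K0 pK by simp
  have q0: "D 2 0 \<theta> t = 0"
    by (rule DERIV_local_max[OF dth1[OF t] zero_less_one]) (use mx in auto)
  have q3: "D 3 0 \<theta> t \<le> 0"
    by (rule second_deriv_max[where f="\<lambda>x. D 1 0 x t" and f'="\<lambda>x. D 2 0 x t"])
       (use dth1[OF t] dth2[OF t] q0 mx in auto)
  define B where "B = 2 * (D 1 0 \<theta> t)^4 + 5 * (D 0 0 \<theta> t)\<^sup>2 * (D 1 0 \<theta> t)\<^sup>2 + (D 0 0 \<theta> t)^4
      - 2 * pi / polar_length D t * (D 1 0 \<theta> t)\<^sup>2 * (polar_g D \<theta> t)^3"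
  have c: "D 1 1 \<theta> t = D 3 0 \<theta> t / (polar_g D \<theta> t)\<^sup>2 + D 1 0 \<theta> t * B / ((D 0 0 \<theta> t)\<^sup>2 * (polar_g D \<theta> t)^4)"
    and B: "B < 0" using crit_common[OF t q0 K _ B_def] pK p by auto
  have den: "(D 0 0 \<theta> t)\<^sup>2 * (polar_g D \<theta> t)^4 > 0" using pos[OF t, of \<theta>] g_pos[OF t, of \<theta>] by simp
  have "D 1 0 \<theta> t * B < 0" using p B by (simp add: mult_pos_neg)
  then have t2: "D 1 0 \<theta> t * B / ((D 0 0 \<theta> t)\<^sup>2 * (polar_g D \<theta> t)^4) < 0" using den by (simp add: divide_neg_pos)
  have t1: "D 3 0 \<theta> t / (polar_g D \<theta> t)\<^sup>2 \<le> 0" using q3 by (simp add: divide_nonpos_nonneg)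
  show ?thesis using c t1 t2 by linarith
qed

lemma key_min:
  assumes t: "t \<in> {0..<\<omega>}" and mn: "\<And>\<phi>. D 1 0 \<theta> t \<le> D 1 0 \<phi> t"
    and K: "3 * polar_length D 0 / pi \<le> K" and pK: "K < - D 1 0 \<theta> t"
  shows "D 1 1 \<theta> t > 0"
proof -
  have L0: "polar_length D 0 > 0" using L_pos[of 0] omega_pos by simp
  have K0: "K > 0" using K L0 pi_gt_zero by (smt (verit) divide_pos_pos)
  have p: "D 1 0 \<theta> t < 0" using K0 pK by simp
  have q0: "D 2 0 \<theta> t = 0"
    by (rule DERIV_local_min[OF dth1[OF t] zero_less_one]) (use mn in auto)
  have q3: "D 3 0 \<theta> t \<ge> 0"
    by (rule second_deriv_min[where f="\<lambda>x. D 1 0 x t" and f'="\<lambda>x. D 2 0 x t"])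
       (use dth1[OF t] dth2[OF t] q0 mn in auto)
  define B where "B = 2 * (D 1 0 \<theta> t)^4 + 5 * (D 0 0 \<theta> t)\<^sup>2 * (D 1 0 \<theta> t)\<^sup>2 + (D 0 0 \<theta> t)^4
      - 2 * pi / polar_length D t * (D 1 0 \<theta> t)\<^sup>2 * (polar_g D \<theta> t)^3"
  have c: "D 1 1 \<theta> t = D 3 0 \<theta> t / (polar_g D \<theta> t)\<^sup>2 + D 1 0 \<theta> t * B / ((D 0 0 \<theta> t)\<^sup>2 * (polar_g D \<theta> t)^4)"
    and B: "B < 0" using crit_common[OF t q0 K _ B_def] pK p by auto
  have den: "(D 0 0 \<theta> t)\<^sup>2 * (polar_g D \<theta> t)^4 > 0" using pos[OF t, of \<theta>] g_pos[OF t, of \<theta>] by simp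
  have "D 1 0 \<theta> t * B > 0" using p B by (simp add: mult_neg_neg)
  then have t2: "D 1 0 \<theta> t * B / ((D 0 0 \<theta> t)\<^sup>2 * (polar_g D \<theta> t)^4) > 0" using den by simp
  have t1: "D 3 0 \<theta> t / (polar_g D \<theta> t)\<^sup>2 \<ge> 0" using q3 by simp
  show ?thesis using c t1 t2 by linarith
qed

lemma main:
  shows "\<forall>\<theta>. \<forall>t\<in>{0..<\<omega>}.
           D 0 0 \<theta> t \<le> polar_length D 0 / 2 \<and>
           \<bar>D 1 0 \<theta> t\<bar> \<le> max (Sup ((\<lambda>\<theta>. \<bar>D 1 0 \<theta> 0\<bar>) ` {0..2*pi}))
                                   (3 * polar_length D 0 / pi)"
proof (intro allI ballI conjI)
  fix \<theta> t assume t: "t \<in> {0..<\<omega>}"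
  show "D 0 0 \<theta> t \<le> polar_length D 0 / 2" using r_bound[OF t, of \<theta>] by simp
  define S where "S = Sup ((\<lambda>\<theta>. \<bar>D 1 0 \<theta> 0\<bar>) ` {0..2*pi})"
  define K where "K = max S (3 * polar_length D 0 / pi)"
  have w0: "0 \<in> {0..<\<omega>}" using omega_pos by simp
  have bdd: "bdd_above ((\<lambda>\<theta>. \<bar>D 1 0 \<theta> 0\<bar>) ` {0..2*pi})"
    by (intro bounded_imp_bdd_above compact_imp_bounded compact_continuous_image compact_Icc
        continuous_intros cont_th[OF w0])
  have init0: "\<bar>D 1 0 \<phi> 0\<bar> \<le> K" for \<phi>
  proof -
    obtain y where y: "y \<in> {0..2*pi}" "D 1 0 \<phi> 0 = D 1 0 y 0"
      using periodic_reduce[of "\<lambda>x. D 1 0 x 0" "2*pi" \<phi>] perD[OF w0, of 1] by auto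
    have "\<bar>D 1 0 y 0\<bar> \<le> S" unfolding S_def by (rule cSUP_upper[OF y(1) bdd])
    then show ?thesis using y unfolding K_def by auto
  qed
  have K3: "3 * polar_length D 0 / pi \<le> K" unfolding K_def by simp
  have c1: "continuous_on (UNIV \<times> {0..<\<omega>}) (\<lambda>(\<theta>, t). D 1 0 \<theta> t)" by (rule cont)
  have c2: "continuous_on (UNIV \<times> {0..<\<omega>}) (\<lambda>(\<theta>, t). - D 1 0 \<theta> t)"
  proof -
    have "(\<lambda>(\<theta>, t). - D 1 0 \<theta> t) = (\<lambda>x. - (\<lambda>(\<theta>, t). D 1 0 \<theta> t) x)" by auto
    then show ?thesis using continuous_on_minus[OF cont[of 1 0]] by simp
  qed
  have up: "D 1 0 \<theta> t \<le> K"
  proof (rule max_principle[where c="2*pi" and P="\<lambda>\<theta> t. D 1 0 \<theta> t" and P'="\<lambda>\<theta> t. D 1 1 \<theta> t", OF _ c1 _ _ _ _ t])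
    show "0 < 2 * pi" by simp
    show "D 1 0 (\<theta> + 2 * pi) t = D 1 0 \<theta> t" if "t \<in> {0..<\<omega>}" for \<theta> t using perD[OF that] .
    show "((\<lambda>s. D 1 0 \<theta> s) has_real_derivative D 1 1 \<theta> t) (at t within {0..<\<omega>})"
      if "t \<in> {0..<\<omega>}" for \<theta> t using dt0[OF that] .
    show "D 1 0 \<theta> 0 \<le> K" for \<theta> using init0[of \<theta>] by simp
    show "D 1 1 \<theta> t < 0" if "t \<in> {0<..<\<omega>}" "\<And>\<phi>. D 1 0 \<phi> t \<le> D 1 0 \<theta> t" "K < D 1 0 \<theta> t" for \<theta> t
      using key_max[OF _ that(2) K3 that(3)] that(1) by auto
  qed
  have lo: "- D 1 0 \<theta> t \<le> K"
  proof (rule max_principle[where c="2*pi" and P="\<lambda>\<theta> t. - D 1 0 \<theta> t" and P'="\<lambda>\<theta> t. - D 1 1 \<theta> t", OF _ c2 _ _ _ _ t])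
    show "0 < 2 * pi" by simp
    show "- D 1 0 (\<theta> + 2 * pi) t = - D 1 0 \<theta> t" if "t \<in> {0..<\<omega>}" for \<theta> t using perD[OF that] by simp
    show "((\<lambda>s. - D 1 0 \<theta> s) has_real_derivative - D 1 1 \<theta> t) (at t within {0..<\<omega>})"
      if "t \<in> {0..<\<omega>}" for \<theta> t using DERIV_minus[OF dt0[OF that]] .
    show "- D 1 0 \<theta> 0 \<le> K" for \<theta> using init0[of \<theta>] by simp
    show "- D 1 1 \<theta> t < 0" if "t \<in> {0<..<\<omega>}" "\<And>\<phi>. - D 1 0 \<phi> t \<le> - D 1 0 \<theta> t" "K < - D 1 0 \<theta> t" for \<theta> t
    proof -
      have "D 1 0 \<theta> t \<le> D 1 0 \<phi> t" for \<phi> using that(2)[of \<phi>] by simp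
      then show ?thesis using key_min[OF _ _ K3 that(3)] that(1) by auto
    qed
  qed
  show "\<bar>D 1 0 \<theta> t\<bar> \<le> max (Sup ((\<lambda>\<theta>. \<bar>D 1 0 \<theta> 0\<bar>) ` {0..2*pi})) (3 * polar_length D 0 / pi)"
    using up lo unfolding K_def S_def by linarith
qed

end


theorem lemma2p4:
  fixes r :: "real \<Rightarrow> real \<Rightarrow> real"
    and D :: "nat \<Rightarrow> nat \<Rightarrow> real \<Rightarrow> real \<Rightarrow> real"
    and \<omega> :: real
  assumes omega_pos: "\<omega> > 0"
    and smooth: "smooth_partials \<omega> r D"
    and periodic: "\<And>\<theta> t. t \<in> {0..<\<omega>} \<Longrightarrow> r (\<theta> + 2*pi) t = r \<theta> t"
    and pos: "\<And>\<theta> t. t \<in> {0..<\<omega>} \<Longrightarrow> r \<theta> t > 0"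
    and pde: "\<And>\<theta> t. t \<in> {0..<\<omega>} \<Longrightarrow>
       D 0 1 \<theta> t =
         D 2 0 \<theta> t / (polar_g D \<theta> t)\<^sup>2
         - 2 * (D 1 0 \<theta> t)\<^sup>2 / (r \<theta> t * (polar_g D \<theta> t)\<^sup>2)
         - r \<theta> t / (polar_g D \<theta> t)\<^sup>2
         + 2 * pi * polar_g D \<theta> t / (r \<theta> t * polar_length D t)"
    and lower: "\<exists>c>0. \<forall>\<theta>. \<forall>t\<in>{0..<\<omega>}. r \<theta> t \<ge> c"
  shows "\<forall>\<theta>. \<forall>t\<in>{0..<\<omega>}.
           r \<theta> t \<le> polar_length D 0 / 2 \<and>
           \<bar>D 1 0 \<theta> t\<bar> \<le> max (Sup ((\<lambda>\<theta>. \<bar>D 1 0 \<theta> 0\<bar>) ` {0..2*pi}))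
                                   (3 * polar_length D 0 / pi)"
proof -
  have r_eq: "r = D 0 0" using smooth unfolding smooth_partials_def by simp
  interpret pf D \<omega>
  proof
    show "\<omega> > 0" by (rule omega_pos)
    show "smooth_partials \<omega> (D 0 0) D" using smooth unfolding r_eq .
    show "D 0 0 (\<theta> + 2*pi) t = D 0 0 \<theta> t" if "t \<in> {0..<\<omega>}" for \<theta> t
      using periodic[OF that] unfolding r_eq .
    show "D 0 0 \<theta> t > 0" if "t \<in> {0..<\<omega>}" for \<theta> t using pos[OF that] unfolding r_eq .
    show "D 0 1 \<theta> t =
         D 2 0 \<theta> t / (polar_g D \<theta> t)\<^sup>2
         - 2 * (D 1 0 \<theta> t)\<^sup>2 / (D 0 0 \<theta> t * (polar_g D \<theta> t)\<^sup>2)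
         - D 0 0 \<theta> t / (polar_g D \<theta> t)\<^sup>2
         + 2 * pi * polar_g D \<theta> t / (D 0 0 \<theta> t * polar_length D t)" if "t \<in> {0..<\<omega>}" for \<theta> t
      using pde[OF that] unfolding r_eq .
  qed
  show ?thesis unfolding r_eq by (rule main)
qed

end
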